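(* Let $i\geq1$ and let $\tau$ be an SSRCT of shape $\alpha$ such that the partition $\widetilde\alpha$ has an addable node in column $i+1$. Then $\phi_{i+1}(\tau)$ has shape $\mathfrak{d}_i(\alpha)$.
   Context: Compositions (positive parts) are drawn as reverse composition diagrams: row $r$ from the top has $\alpha_r$ left-justified boxes; $\widetilde\alpha$ is the partition obtained by sorting the parts of $\alpha$ decreasingly; an addable node of a partition is a position whose addition gives a partition. An SSRCT of shape $\alpha$ is a filling by positive integers with rows weakly decreasing left to right, first column strictly increasing top to bottom, and: for rows $r<s$ and column $c$ with $(s,c+1)\in\alpha$, if $(r,c)\in\alpha$ and $\tau(r,c)\geq\tau(s,c+1)$ then $(r,c+1)\in\alpha$ and $\tau(r,c+1)>\tau(s,c+1)$. $\mathfrak{d}_i(\alpha)$ is obtained by subtracting $1$ from the rightmost part of $\alpha$ equal to $i$ and omitting a resulting $0$. $\phi_{i+1}$: set $\tau(r,c)=0$ outside $\alpha$; let $r_1$ be the largest index with $\alpha_{r_1}=i$, and for $j\geq2$ let $r_j$ be the largest $r<r_{j-1}$ with $\tau(r,i)>\tau(r_{j-1},i)\geq\tau(r,i+1)$, ending at $r_k$. $\phi_{i+1}(\tau)$ is obtained by placing, for $j=k,\ldots,2$, the original entry $\tau(r_{j-1},i)$ into box $(r_j,i)$ and deleting box $(r_1,i)$ (deleting the row if it becomes empty). *)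

theory Defs
  imports Main
begin

(* Conventions: a composition / partition is a list of naturals; rows and columns are
   indexed from 1; row r (from the top) of alpha has  alpha ! (r - 1)  boxes. *)

definition is_composition :: "nat list \<Rightarrow> bool" where
  "is_composition \<alpha> \<longleftrightarrow> (\<forall>p\<in>set \<alpha>. 0 < p)"

definition diagram :: "nat list \<Rightarrow> (nat \<times> nat) set" where
  "diagram \<alpha> = {(r, c). 1 \<le> r \<and> r \<le> length \<alpha> \<and> 1 \<le> c \<and> c \<le> \<alpha> ! (r - 1)}"

definition sort_dec :: "nat list \<Rightarrow> nat list" where
  "sort_dec \<alpha> = rev (sort \<alpha>)"

definition is_partition_shape :: "(nat \<times> nat) set \<Rightarrow> bool" where
  "is_partition_shape S \<longleftrightarrow> finite S \<and>
     (\<forall>(r, c)\<in>S. 1 \<le> r \<and> 1 \<le> c \<and>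
        (1 < r \<longrightarrow> (r - 1, c) \<in> S) \<and> (1 < c \<longrightarrow> (r, c - 1) \<in> S))"

definition addable :: "nat list \<Rightarrow> nat \<times> nat \<Rightarrow> bool" where
  "addable la x \<longleftrightarrow> x \<notin> diagram la \<and> is_partition_shape (insert x (diagram la))"

(* semistandard reverse composition tableau of shape alpha (entries outside alpha irrelevant) *)
definition ssrct :: "nat list \<Rightarrow> (nat \<Rightarrow> nat \<Rightarrow> nat) \<Rightarrow> bool" where
  "ssrct \<alpha> \<tau> \<longleftrightarrow> is_composition \<alpha> \<and>
     (\<forall>(r, c)\<in>diagram \<alpha>. 0 < \<tau> r c) \<and>
     (\<forall>r c. (r, c + 1) \<in> diagram \<alpha> \<longrightarrow> \<tau> r c \<ge> \<tau> r (c + 1)) \<and>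
     (\<forall>r s. r < s \<longrightarrow> (r, 1) \<in> diagram \<alpha> \<longrightarrow> (s, 1) \<in> diagram \<alpha> \<longrightarrow> \<tau> r 1 < \<tau> s 1) \<and>
     (\<forall>r s c. r < s \<longrightarrow> (s, c + 1) \<in> diagram \<alpha> \<longrightarrow> (r, c) \<in> diagram \<alpha> \<longrightarrow>
        \<tau> r c \<ge> \<tau> s (c + 1) \<longrightarrow>
        ((r, c + 1) \<in> diagram \<alpha> \<and> \<tau> r (c + 1) > \<tau> s (c + 1)))"

definition ext0 :: "nat list \<Rightarrow> (nat \<Rightarrow> nat \<Rightarrow> nat) \<Rightarrow> nat \<Rightarrow> nat \<Rightarrow> nat" where
  "ext0 \<alpha> \<tau> r c = (if (r, c) \<in> diagram \<alpha> then \<tau> r c else 0)"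

definition last_row :: "nat list \<Rightarrow> nat \<Rightarrow> nat" where
  "last_row \<alpha> i = (GREATEST r. 1 \<le> r \<and> r \<le> length \<alpha> \<and> \<alpha> ! (r - 1) = i)"

definition next_row :: "nat list \<Rightarrow> (nat \<Rightarrow> nat \<Rightarrow> nat) \<Rightarrow> nat \<Rightarrow> nat \<Rightarrow> nat" where
  "next_row \<alpha> \<tau> i r =
     (let P = (\<lambda>r'. 1 \<le> r' \<and> r' < r \<and>
                  ext0 \<alpha> \<tau> r' i > ext0 \<alpha> \<tau> r i \<and> ext0 \<alpha> \<tau> r i \<ge> ext0 \<alpha> \<tau> r' (i + 1))
      in if \<exists>r'. P r' then (GREATEST r'. P r') else 0)"

(* the sequence r, next, next, ... until it stops (fuel n suffices since rows decrease) *)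
primrec chain_aux :: "nat list \<Rightarrow> (nat \<Rightarrow> nat \<Rightarrow> nat) \<Rightarrow> nat \<Rightarrow> nat \<Rightarrow> nat \<Rightarrow> nat list" where
  "chain_aux \<alpha> \<tau> i 0 r = [r]"
| "chain_aux \<alpha> \<tau> i (Suc n) r =
     (let r' = next_row \<alpha> \<tau> i r in if r' = 0 then [r] else r # chain_aux \<alpha> \<tau> i n r')"

definition phi_chain :: "nat list \<Rightarrow> (nat \<Rightarrow> nat \<Rightarrow> nat) \<Rightarrow> nat \<Rightarrow> nat list" where
  "phi_chain \<alpha> \<tau> i = chain_aux \<alpha> \<tau> i (last_row \<alpha> i) (last_row \<alpha> i)"

definition tab_map :: "nat list \<Rightarrow> (nat \<Rightarrow> nat \<Rightarrow> nat) \<Rightarrow> (nat \<times> nat) \<Rightarrow> nat option" where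
  "tab_map \<alpha> \<tau> x = (if x \<in> diagram \<alpha> then Some (\<tau> (fst x) (snd x)) else None)"

(* phi_{i+1}: for j = k, ..., 2 place tau(r_{j-1}, i) into box (r_j, i); delete box (r_1, i);
   delete row r_1 (shifting the rows below up) if it becomes empty *)
definition phi :: "nat \<Rightarrow> nat list \<Rightarrow> (nat \<Rightarrow> nat \<Rightarrow> nat) \<Rightarrow> (nat \<times> nat) \<Rightarrow> nat option" where
  "phi i \<alpha> \<tau> =
     (let rs = phi_chain \<alpha> \<tau> i; r1 = hd rs;
          M1 = fold (\<lambda>(a, b) M. M((a, i) \<mapsto> ext0 \<alpha> \<tau> b i)) (rev (zip (tl rs) rs)) (tab_map \<alpha> \<tau>);
          M2 = M1((r1, i) := None)
      in if (\<exists>c. M2 (r1, c) \<noteq> None) then M2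
         else (\<lambda>(r, c). if r < r1 then M2 (r, c) else M2 (r + 1, c)))"

definition d_op :: "nat \<Rightarrow> nat list \<Rightarrow> nat list" where
  "d_op i \<alpha> =
     (if \<exists>r. 1 \<le> r \<and> r \<le> length \<alpha> \<and> \<alpha> ! (r - 1) = i then
        (let r = last_row \<alpha> i in
          if \<alpha> ! (r - 1) - 1 = 0 then take (r - 1) \<alpha> @ drop r \<alpha>
          else \<alpha>[r - 1 := \<alpha> ! (r - 1) - 1])
      else \<alpha>)"

end

theory Submission
  imports Defs
begin

lemma chain_aux_hd: "hd (chain_aux \<alpha> \<tau> i n r) = r"
  by (cases n) (auto simp: Let_def)

lemma next_row_pos:
  assumes "next_row \<alpha> \<tau> i r = r'" "r' \<noteq> 0"
  shows "ext0 \<alpha> \<tau> r' i > 0"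
proof -
  let ?P = "\<lambda>r'. 1 \<le> r' \<and> r' < r \<and>
                  ext0 \<alpha> \<tau> r' i > ext0 \<alpha> \<tau> r i \<and> ext0 \<alpha> \<tau> r i \<ge> ext0 \<alpha> \<tau> r' (i + 1)"
  have nr: "next_row \<alpha> \<tau> i r = (if \<exists>x. ?P x then (GREATEST x. ?P x) else 0)"
    unfolding next_row_def Let_def by (rule refl)
  have ex: "\<exists>x. ?P x"
  proof (rule ccontr)
    assume "\<not> (\<exists>x. ?P x)"
    hence "next_row \<alpha> \<tau> i r = 0" unfolding nr by (simp only: if_False)
    thus False using assms by simp
  qed
  hence r'eq: "r' = (GREATEST x. ?P x)" using assms(1) unfolding nr by (simp only: if_True)
  have bnd: "\<And>y. ?P y \<Longrightarrow> y \<le> r" by (simp only: less_imp_le)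
  have "?P (GREATEST x. ?P x)"
    using ex bnd by (rule GreatestI_ex_nat)
  hence "ext0 \<alpha> \<tau> r i < ext0 \<alpha> \<tau> r' i" unfolding r'eq by (simp only:)
  thus ?thesis by (rule le_less_trans[OF le0])
qed

lemma chain_aux_Suc:
  "chain_aux \<alpha> \<tau> i (Suc n) r = (if next_row \<alpha> \<tau> i r = 0 then [r] else r # chain_aux \<alpha> \<tau> i n (next_row \<alpha> \<tau> i r))"
  by (simp only: chain_aux.simps Let_def)

lemma chain_aux_set:
  "x \<in> set (chain_aux \<alpha> \<tau> i n r) \<Longrightarrow> x = r \<or> ext0 \<alpha> \<tau> x i > 0"
proof (induction n arbitrary: r)
  case 0 then have "x \<in> set [r]" by (simp only: chain_aux.simps)
  then show ?case by simp
next
  case (Suc n)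
  show ?case
  proof (cases "next_row \<alpha> \<tau> i r = 0")
    case True
    then have "x \<in> set [r]" using Suc.prems by (simp only: chain_aux_Suc if_True simp_thms)
    then show ?thesis by simp
  next
    case False
    then have "x \<in> set (r # chain_aux \<alpha> \<tau> i n (next_row \<alpha> \<tau> i r))"
      using Suc.prems by (simp only: chain_aux_Suc if_False)
    then have "x = r \<or> x \<in> set (chain_aux \<alpha> \<tau> i n (next_row \<alpha> \<tau> i r))"
      by (simp only: list.set insert_iff)
    then show ?thesis
    proof
      assume "x = r" then show ?thesis by (rule disjI1)
    next
      assume "x \<in> set (chain_aux \<alpha> \<tau> i n (next_row \<alpha> \<tau> i r))"
      then have h: "x = next_row \<alpha> \<tau> i r \<or> ext0 \<alpha> \<tau> x i > 0" by (rule Suc.IH)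
      have p: "ext0 \<alpha> \<tau> (next_row \<alpha> \<tau> i r) i > 0" by (rule next_row_pos[OF refl False])
      from h show ?thesis
      proof
        assume "x = next_row \<alpha> \<tau> i r" then show ?thesis using p by (simp only: disj_not1 not_less0 simp_thms)
      next
        assume "ext0 \<alpha> \<tau> x i > 0" then show ?thesis by (rule disjI2)
      qed
    qed
  qed
qed

lemma chain_aux_tl:
  assumes "x \<in> set (tl (chain_aux \<alpha> \<tau> i n r))" shows "ext0 \<alpha> \<tau> x i > 0"
proof (cases n)
  case 0 then show ?thesis using assms by simp
next
  case (Suc m)
  show ?thesis
  proof (cases "next_row \<alpha> \<tau> i r = 0")
    case True
    then have "x \<in> set (tl [r])" using Suc assms by (simp only: chain_aux_Suc if_True simp_thms)
    then show ?thesis by simp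
  next
    case False
    then have "x \<in> set (tl (r # chain_aux \<alpha> \<tau> i m (next_row \<alpha> \<tau> i r)))"
      using Suc assms by (simp only: chain_aux_Suc if_False)
    then have "x \<in> set (chain_aux \<alpha> \<tau> i m (next_row \<alpha> \<tau> i r))" by (simp only: list.sel)
    then have "x = next_row \<alpha> \<tau> i r \<or> ext0 \<alpha> \<tau> x i > 0" by (rule chain_aux_set)
    then show ?thesis
    proof
      assume "x = next_row \<alpha> \<tau> i r" then show ?thesis using next_row_pos[OF refl False] by (simp only:)
    qed
  qed
qed

lemma dom_fold:
  "dom (fold (\<lambda>(a, b) M. M((a, i) \<mapsto> v b)) xs M) = dom M \<union> {(a, i) | a. a \<in> fst ` set xs}"
proof (induction xs arbitrary: M)
  case Nil then show ?case by simp
next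
  case (Cons p xs)
  obtain a b where p: "p = (a, b)" by force
  have e1: "fold (\<lambda>(a, b) M. M((a, i) \<mapsto> v b)) (p # xs) M = fold (\<lambda>(a, b) M. M((a, i) \<mapsto> v b)) xs (M((a, i) \<mapsto> v b))"
    by (simp only: p fold_Cons comp_def prod.case)
  have e2: "dom (fold (\<lambda>(a, b) M. M((a, i) \<mapsto> v b)) xs (M((a, i) \<mapsto> v b))) = dom (M((a, i) \<mapsto> v b)) \<union> {(a, i) | a. a \<in> fst ` set xs}"
    by (rule Cons.IH)
  have e3: "fst ` set (p # xs) = insert a (fst ` set xs)" by (simp add: p)
  have e4: "dom (M((a, i) \<mapsto> v b)) = insert (a, i) (dom M)" by simp
  show ?case unfolding e1 e2 e3 e4 by blast
qed

lemma ext0_pos_diag: "ext0 \<alpha> \<tau> r c > 0 \<Longrightarrow> (r, c) \<in> diagram \<alpha>"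
  by (auto simp: ext0_def split: if_splits)

theorem lemma6p22:
  fixes i :: nat and \<alpha> :: "nat list" and \<tau> :: "nat \<Rightarrow> nat \<Rightarrow> nat"
  assumes "1 \<le> i"
    and "ssrct \<alpha> \<tau>"
    and "\<exists>r. addable (sort_dec \<alpha>) (r, i + 1)"
  shows "dom (phi i \<alpha> \<tau>) = diagram (d_op i \<alpha>)"
proof -
  obtain r where r: "addable (sort_dec \<alpha>) (r, i + 1)" using assms(3) by blast
  let ?la = "sort_dec \<alpha>"
  have "(r, i) \<in> insert (r, i+1) (diagram ?la)"
    using r assms(1) unfolding addable_def is_partition_shape_def by fastforce
  hence "(r, i) \<in> diagram ?la" by auto
  moreover have "(r, i+1) \<notin> diagram ?la" using r by (simp add: addable_def)
  ultimately have "r \<le> length ?la" "1 \<le> r" "?la ! (r - 1) = i"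
    by (auto simp: diagram_def)
  hence "i \<in> set ?la" using nth_mem[of "r - 1" ?la] by simp
  hence "i \<in> set \<alpha>" by (simp add: sort_dec_def)
  then obtain k where k: "k < length \<alpha>" "\<alpha> ! k = i" by (metis in_set_conv_nth)
  define Q where "Q = (\<lambda>r. 1 \<le> r \<and> r \<le> length \<alpha> \<and> \<alpha> ! (r - 1) = i)"
  have exQ: "\<exists>r. Q r" using k by (auto simp: Q_def intro!: exI[of _ "Suc k"])
  define r1 where "r1 = last_row \<alpha> i"
  have r1eq: "r1 = (GREATEST r. Q r)" by (simp add: r1_def last_row_def Q_def)
  have Qr1: "Q r1" unfolding r1eq
    using exQ by (rule GreatestI_ex_nat[where b = "length \<alpha>"]) (auto simp: Q_def)
  hence r1: "1 \<le> r1" "r1 \<le> length \<alpha>" "\<alpha> ! (r1 - 1) = i" by (auto simp: Q_def)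
  define rs where "rs = phi_chain \<alpha> \<tau> i"
  have hdrs: "hd rs = r1" by (simp add: rs_def phi_chain_def chain_aux_hd r1_def)
  have tlrs: "\<And>x. x \<in> set (tl rs) \<Longrightarrow> (x, i) \<in> diagram \<alpha>"
    using chain_aux_tl ext0_pos_diag unfolding rs_def phi_chain_def by blast
  define M1 where "M1 = fold (\<lambda>(a, b) M. M((a, i) \<mapsto> ext0 \<alpha> \<tau> b i)) (rev (zip (tl rs) rs)) (tab_map \<alpha> \<tau>)"
  define M2 where "M2 = M1((r1, i) := None)"
  have domtab: "dom (tab_map \<alpha> \<tau>) = diagram \<alpha>" by (auto simp: tab_map_def split: if_splits)
  have "fst ` set (rev (zip (tl rs) rs)) \<subseteq> set (tl rs)"
    by (auto dest: set_zip_leftD)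
  hence domM1: "dom M1 = diagram \<alpha>"
    unfolding M1_def dom_fold domtab using tlrs by auto
  have domM2: "dom M2 = diagram \<alpha> - {(r1, i)}" using domM1 by (auto simp: M2_def)
  have phieq: "phi i \<alpha> \<tau> = (if (\<exists>c. M2 (r1, c) \<noteq> None) then M2
         else (\<lambda>(r, c). if r < r1 then M2 (r, c) else M2 (r + 1, c)))"
    by (simp only: phi_def Let_def M2_def M1_def rs_def hdrs[unfolded rs_def])
  have dop: "d_op i \<alpha> = (if \<alpha> ! (r1 - 1) - 1 = 0 then take (r1 - 1) \<alpha> @ drop r1 \<alpha>
          else \<alpha>[r1 - 1 := \<alpha> ! (r1 - 1) - 1])"
    using exQ unfolding d_op_def Q_def r1_def[symmetric] by simp
  show ?thesis
  proof (cases "i = 1")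
    case False
    with assms(1) have "(r1, 1) \<in> dom M2" using domM2 r1 by (auto simp: diagram_def)
    hence "\<exists>c. M2 (r1, c) \<noteq> None" by auto
    hence "dom (phi i \<alpha> \<tau>) = diagram \<alpha> - {(r1, i)}" using phieq domM2 by simp
    also have "\<dots> = diagram (d_op i \<alpha>)" using r1 False assms(1)
      by (auto simp: dop diagram_def nth_list_update split: if_splits)
    finally show ?thesis .
  next
    case True
    have "\<And>c. (r1, c) \<notin> dom M2"
      using domM2 r1 True by (auto simp: diagram_def)
    hence "\<not> (\<exists>c. M2 (r1, c) \<noteq> None)" by (simp add: domIff)
    hence "phi i \<alpha> \<tau> = (\<lambda>(r, c). if r < r1 then M2 (r, c) else M2 (r + 1, c))"
      using phieq by simp
    hence "dom (phi i \<alpha> \<tau>) = {(r, c). if r < r1 then (r, c) \<in> dom M2 else (r+1, c) \<in> dom M2}"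
      by (auto simp: domIff split: if_splits)
    also have "\<dots> = diagram (d_op i \<alpha>)"
    proof -
      define \<beta> where "\<beta> = take (r1 - 1) \<alpha> @ drop r1 \<alpha>"
      have db: "d_op i \<alpha> = \<beta>" using dop r1 True by (simp add: \<beta>_def)
      have lb: "length \<beta> = length \<alpha> - 1" using r1 by (simp add: \<beta>_def)
      have nb: "\<And>j. j < length \<beta> \<Longrightarrow> \<beta> ! j = (if j < r1 - 1 then \<alpha> ! j else \<alpha> ! Suc j)"
        using r1 by (auto simp: \<beta>_def nth_append)
      show ?thesis
      proof (rule set_eqI, clarify)
        fix a b
        show "((a, b) \<in> {(r, c). if r < r1 then (r, c) \<in> dom M2 else (r+1, c) \<in> dom M2})
              = ((a, b) \<in> diagram (d_op i \<alpha>))"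
        proof (cases "a < r1")
          case True
          have "((a, b) \<in> {(r, c). if r < r1 then (r, c) \<in> dom M2 else (r+1, c) \<in> dom M2})
             = ((a, b) \<in> diagram \<alpha> - {(r1, i)})" using True domM2 by simp
          also have "\<dots> = (1 \<le> a \<and> a \<le> length \<alpha> \<and> 1 \<le> b \<and> b \<le> \<alpha> ! (a - 1))"
            using True by (auto simp: diagram_def)
          also have "\<dots> = ((a, b) \<in> diagram \<beta>)"
          proof (cases "1 \<le> a")
            case a1: True
            have l: "a - 1 < length \<beta>" "a \<le> length \<alpha>" "a \<le> length \<beta>" using True a1 r1 lb by linarith+
            have "a - 1 < r1 - 1" using True a1 by linarith
            hence "\<beta> ! (a - 1) = \<alpha> ! (a - 1)" using nb[OF l(1)] by simp
            then show ?thesis using l a1 unfolding diagram_def by simp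
          next
            case False then show ?thesis unfolding diagram_def by simp
          qed
          finally show ?thesis unfolding db .
        next
          case False
          have "((a, b) \<in> {(r, c). if r < r1 then (r, c) \<in> dom M2 else (r+1, c) \<in> dom M2})
             = ((a + 1, b) \<in> diagram \<alpha> - {(r1, i)})" using False domM2 by simp
          also have "\<dots> = (a + 1 \<le> length \<alpha> \<and> 1 \<le> b \<and> b \<le> \<alpha> ! a)"
            using False by (auto simp: diagram_def)
          also have "\<dots> = ((a, b) \<in> diagram \<beta>)"
          proof -
            have e: "a + 1 \<le> length \<alpha> \<longleftrightarrow> a \<le> length \<beta>" using False r1 lb by linarith
            have h: "\<not> a - 1 < r1 - 1" "Suc (a - 1) = a" "1 \<le> a" using False r1 by linarith+
            show ?thesis
            proof (cases "a \<le> length \<beta>")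
              case lb2: True
              hence "a - 1 < length \<beta>" using h by linarith
              from nb[OF this] h(1,2) have "\<beta> ! (a - 1) = \<alpha> ! a" by simp
              then have "(a, b) \<in> diagram \<beta> \<longleftrightarrow> 1 \<le> b \<and> b \<le> \<alpha> ! a"
                using lb2 h(3) by (simp add: diagram_def)
              moreover have "a + 1 \<le> length \<alpha>" using e lb2 by blast
              ultimately show ?thesis by blast
            next
              case lb2: False
              then have "(a, b) \<notin> diagram \<beta>" by (simp add: diagram_def)
              moreover have "\<not> a + 1 \<le> length \<alpha>" using e lb2 by blast
              ultimately show ?thesis by blast
            qed
          qed
          finally show ?thesis unfolding db .
        qed
      qed
    qed
    finally show ?thesis .
  qed
qed

end
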